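(* Let $\{\triangleright, ;\}\subseteq\sigma\subseteq\{\triangleright, ;, \wedge, \mathrm{upd}, \sqcup, \mathsf{D}, \mathsf{A}\}$ and let $\mathcal{A}$ be a $\sigma$-algebra that is representable by partial functions and whose atoms are separating. Write $\mathrm{At}(\mathcal{A})$ for its set of atoms, and define $a\sim b$ iff $a\lhd b = b$ and $b\lhd a = a$ (an equivalence relation). If $\mathsf{D},\mathsf{A}\notin\sigma$, for each $a\in\mathcal{A}$ let $\theta(a)$ be the partial function on the disjoint union $\mathrm{At}(\mathcal{A}) \amalg (\mathrm{At}(\mathcal{A})/{\sim})$ given, for $x\in\mathrm{At}(\mathcal{A})$, by $\theta(a)(x) = x;a$ if $x;a\neq 0$ (undefined otherwise) and $\theta(a)(x/{\sim}) = x\lhd a$ if $x\lhd a\ne 0$ (undefined otherwise). If $\mathsf{D}\in\sigma$ or $\mathsf{A}\in\sigma$, let instead $\theta(a)$ be the partial function on $\mathrm{At}(\mathcal{A})$ given by $\theta(a)(x)=x;a$ if $x;a\ne0$ and undefined otherwise. Then $\theta$ is well defined (its values are atoms, and the second component does not depend on the choice of representative of $x/{\sim}$) and is a representation of $\mathcal{A}$ by partial functions. Moreover: (1) if composition in $\mathcal{A}$ is completely left-distributive over joins, then $\theta$ is join complete; (2) if composition in $\mathcal{A}$ is completely left-distributive over meets, then $\theta$ is meet complete.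
   Context: The operations are interpreted on partial functions on a base set $X$ as: $f \triangleright g = \{(x,y) \in g : x \notin \mathrm{dom}(f)\}$; $f;g=\{(x,z):\exists y\,((x,y)\in f,(y,z)\in g)\}$; $f\wedge g = f\cap g$; $\mathrm{upd}(f,g)(x)$ is $f(x)$ if $f(x)$ defined and $g(x)$ undefined, $g(x)$ if both defined, undefined otherwise; $(f\sqcup g)(x)$ is $f(x)$ if defined, else $g(x)$; $\mathsf{D}(f)$ = identity on $\mathrm{dom}(f)$; $\mathsf{A}(f)$ = identity on $X\setminus\mathrm{dom}(f)$. A representation by partial functions is an isomorphism onto a $\sigma$-algebra of partial functions with these operations. Define $0 := a\triangleright a$, $a\lhd b := (a\triangleright b)\triangleright b$, $a \le b :\iff a\lhd b = a$; for representable algebras this is a partial order with least element $0$. An atom is a minimal nonzero element; atoms are separating if whenever $a\not\le b$ there is an atom $c\le a$ with $c\not\le b$. Composition is completely left-distributive over joins if for all $S$ with $\bigvee S$ existing and all $a$, $\bigvee\{a;s:s\in S\}$ exists and equals $a;\bigvee S$; over meets, the same with nonempty $S$ and meets. $\theta$ is join complete if $\theta(\bigvee S)=\bigcup\theta[S]$ whenever $\bigvee S$ exists; meet complete if $\theta(\bigwedge S)=\bigcap\theta[S]$ whenever $S\ne\emptyset$ and $\bigwedge S$ exists. *)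

theory Defs
  imports Main
begin

text \<open>Operation symbols: Ovr = override (triangleright), Comp = composition (;),
  Meet = intersection, Upd = update, PJoin = preferential union, Dom = D, ADom = A.\<close>
datatype opsym = Ovr | Comp | Meet | Upd | PJoin | Dom | ADom

text \<open>An algebra with carrier the type 'a carrying all seven operations; a sigma-algebra
  only uses the operations whose symbols lie in sigma (the others are ignored).\<close>
record 'a alg =
  ovr :: "'a \<Rightarrow> 'a \<Rightarrow> 'a"
  cmp :: "'a \<Rightarrow> 'a \<Rightarrow> 'a"
  mt :: "'a \<Rightarrow> 'a \<Rightarrow> 'a"
  upd :: "'a \<Rightarrow> 'a \<Rightarrow> 'a"
  pjn :: "'a \<Rightarrow> 'a \<Rightarrow> 'a"
  dm :: "'a \<Rightarrow> 'a"
  adm :: "'a \<Rightarrow> 'a"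

definition pf_ovr :: "('b \<rightharpoonup> 'b) \<Rightarrow> ('b \<rightharpoonup> 'b) \<Rightarrow> ('b \<rightharpoonup> 'b)" where
  "pf_ovr f g = (\<lambda>x. if f x = None then g x else None)"

definition pf_comp :: "('b \<rightharpoonup> 'b) \<Rightarrow> ('b \<rightharpoonup> 'b) \<Rightarrow> ('b \<rightharpoonup> 'b)" where
  "pf_comp f g = (\<lambda>x. case f x of None \<Rightarrow> None | Some y \<Rightarrow> g y)"

definition pf_meet :: "('b \<rightharpoonup> 'b) \<Rightarrow> ('b \<rightharpoonup> 'b) \<Rightarrow> ('b \<rightharpoonup> 'b)" where
  "pf_meet f g = (\<lambda>x. if f x = g x then f x else None)"

definition pf_upd :: "('b \<rightharpoonup> 'b) \<Rightarrow> ('b \<rightharpoonup> 'b) \<Rightarrow> ('b \<rightharpoonup> 'b)" where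
  "pf_upd f g = (\<lambda>x. case f x of None \<Rightarrow> None
                                | Some y \<Rightarrow> (case g x of None \<Rightarrow> Some y | Some z \<Rightarrow> Some z))"

definition pf_join :: "('b \<rightharpoonup> 'b) \<Rightarrow> ('b \<rightharpoonup> 'b) \<Rightarrow> ('b \<rightharpoonup> 'b)" where
  "pf_join f g = (\<lambda>x. case f x of Some y \<Rightarrow> Some y | None \<Rightarrow> g x)"

definition pf_D :: "('b \<rightharpoonup> 'b) \<Rightarrow> ('b \<rightharpoonup> 'b)" where
  "pf_D f = (\<lambda>x. if f x \<noteq> None then Some x else None)"

definition pf_A :: "'b set \<Rightarrow> ('b \<rightharpoonup> 'b) \<Rightarrow> ('b \<rightharpoonup> 'b)" where
  "pf_A X f = (\<lambda>x. if x \<in> X \<and> f x = None then Some x else None)"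

definition pfun_on :: "'b set \<Rightarrow> ('b \<rightharpoonup> 'b) \<Rightarrow> bool" where
  "pfun_on X f \<longleftrightarrow> dom f \<subseteq> X \<and> ran f \<subseteq> X"

definition pgraph :: "('b \<rightharpoonup> 'b) \<Rightarrow> ('b \<times> 'b) set" where
  "pgraph f = {(x, y). f x = Some y}"

definition is_rep :: "opsym set \<Rightarrow> 'a alg \<Rightarrow> 'b set \<Rightarrow> ('a \<Rightarrow> ('b \<rightharpoonup> 'b)) \<Rightarrow> bool" where
  "is_rep \<sigma> A X \<theta> \<longleftrightarrow>
     inj \<theta> \<and> (\<forall>a. pfun_on X (\<theta> a)) \<and>
     (Ovr \<in> \<sigma> \<longrightarrow> (\<forall>a b. \<theta> (ovr A a b) = pf_ovr (\<theta> a) (\<theta> b))) \<and>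
     (Comp \<in> \<sigma> \<longrightarrow> (\<forall>a b. \<theta> (cmp A a b) = pf_comp (\<theta> a) (\<theta> b))) \<and>
     (Meet \<in> \<sigma> \<longrightarrow> (\<forall>a b. \<theta> (mt A a b) = pf_meet (\<theta> a) (\<theta> b))) \<and>
     (Upd \<in> \<sigma> \<longrightarrow> (\<forall>a b. \<theta> (upd A a b) = pf_upd (\<theta> a) (\<theta> b))) \<and>
     (PJoin \<in> \<sigma> \<longrightarrow> (\<forall>a b. \<theta> (pjn A a b) = pf_join (\<theta> a) (\<theta> b))) \<and>
     (Dom \<in> \<sigma> \<longrightarrow> (\<forall>a. \<theta> (dm A a) = pf_D (\<theta> a))) \<and>
     (ADom \<in> \<sigma> \<longrightarrow> (\<forall>a. \<theta> (adm A a) = pf_A X (\<theta> a)))"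

text \<open>0 := a \<triangleright> a (independent of a in representable algebras).\<close>
definition zr :: "'a alg \<Rightarrow> 'a" where
  "zr A = (THE z. \<forall>a. ovr A a a = z)"

definition restr :: "'a alg \<Rightarrow> 'a \<Rightarrow> 'a \<Rightarrow> 'a" where
  "restr A a b = ovr A (ovr A a b) b"

definition leq :: "'a alg \<Rightarrow> 'a \<Rightarrow> 'a \<Rightarrow> bool" where
  "leq A a b \<longleftrightarrow> restr A a b = a"

definition is_atom :: "'a alg \<Rightarrow> 'a \<Rightarrow> bool" where
  "is_atom A c \<longleftrightarrow> c \<noteq> zr A \<and> (\<forall>d. leq A d c \<and> d \<noteq> zr A \<longrightarrow> d = c)"

definition atoms :: "'a alg \<Rightarrow> 'a set" where
  "atoms A = {c. is_atom A c}"

definition separating :: "'a alg \<Rightarrow> bool" where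
  "separating A \<longleftrightarrow>
     (\<forall>a b. \<not> leq A a b \<longrightarrow> (\<exists>c. is_atom A c \<and> leq A c a \<and> \<not> leq A c b))"

definition sim :: "'a alg \<Rightarrow> 'a \<Rightarrow> 'a \<Rightarrow> bool" where
  "sim A a b \<longleftrightarrow> restr A a b = b \<and> restr A b a = a"

definition sim_rel :: "'a alg \<Rightarrow> ('a \<times> 'a) set" where
  "sim_rel A = {(a, b). a \<in> atoms A \<and> b \<in> atoms A \<and> sim A a b}"

definition is_lub :: "'a alg \<Rightarrow> 'a set \<Rightarrow> 'a \<Rightarrow> bool" where
  "is_lub A S j \<longleftrightarrow> (\<forall>s\<in>S. leq A s j) \<and> (\<forall>u. (\<forall>s\<in>S. leq A s u) \<longrightarrow> leq A j u)"

definition is_glb :: "'a alg \<Rightarrow> 'a set \<Rightarrow> 'a \<Rightarrow> bool" where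
  "is_glb A S m \<longleftrightarrow> (\<forall>s\<in>S. leq A m s) \<and> (\<forall>l. (\<forall>s\<in>S. leq A l s) \<longrightarrow> leq A l m)"

definition cld_joins :: "'a alg \<Rightarrow> bool" where
  "cld_joins A \<longleftrightarrow>
     (\<forall>S j a. is_lub A S j \<longrightarrow> is_lub A ((\<lambda>s. cmp A a s) ` S) (cmp A a j))"

definition cld_meets :: "'a alg \<Rightarrow> bool" where
  "cld_meets A \<longleftrightarrow>
     (\<forall>S m a. S \<noteq> {} \<and> is_glb A S m \<longrightarrow> is_glb A ((\<lambda>s. cmp A a s) ` S) (cmp A a m))"

definition join_complete :: "'a alg \<Rightarrow> ('a \<Rightarrow> ('b \<rightharpoonup> 'b)) \<Rightarrow> bool" where
  "join_complete A \<theta> \<longleftrightarrow>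
     (\<forall>S j. is_lub A S j \<longrightarrow> pgraph (\<theta> j) = (\<Union>s\<in>S. pgraph (\<theta> s)))"

definition meet_complete :: "'a alg \<Rightarrow> ('a \<Rightarrow> ('b \<rightharpoonup> 'b)) \<Rightarrow> bool" where
  "meet_complete A \<theta> \<longleftrightarrow>
     (\<forall>S m. S \<noteq> {} \<and> is_glb A S m \<longrightarrow> pgraph (\<theta> m) = (\<Inter>s\<in>S. pgraph (\<theta> s)))"

definition base1 :: "'a alg \<Rightarrow> ('a + 'a set) set" where
  "base1 A = Inl ` atoms A \<union> Inr ` (atoms A // sim_rel A)"

definition theta1 :: "'a alg \<Rightarrow> 'a \<Rightarrow> (('a + 'a set) \<rightharpoonup> ('a + 'a set))" where
  "theta1 A a = (\<lambda>p. case p of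
      Inl x \<Rightarrow> (if x \<in> atoms A \<and> cmp A x a \<noteq> zr A then Some (Inl (cmp A x a)) else None)
    | Inr c \<Rightarrow> (if c \<in> atoms A // sim_rel A \<and> restr A (SOME x. x \<in> c) a \<noteq> zr A
               then Some (Inl (restr A (SOME x. x \<in> c) a)) else None))"

definition theta2 :: "'a alg \<Rightarrow> 'a \<Rightarrow> ('a \<rightharpoonup> 'a)" where
  "theta2 A a = (\<lambda>x. if x \<in> atoms A \<and> cmp A x a \<noteq> zr A then Some (cmp A x a) else None)"

end

theory Submission
  imports Defs
begin

lemma map_le_eq: "f \<subseteq>\<^sub>m g \<Longrightarrow> dom g \<subseteq> dom f \<Longrightarrow> f = g"
  apply (rule ext)
  subgoal for x by (cases "f x"; cases "g x") (auto simp: map_le_def dom_def)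
  done

locale rp =
  fixes A :: "'a alg" and X :: "'b set" and T :: "'a \<Rightarrow> ('b \<rightharpoonup> 'b)"
  assumes injT: "inj T" and pfT: "\<And>a. pfun_on X (T a)"
  and ovrT: "\<And>a b. T (ovr A a b) = pf_ovr (T a) (T b)"
  and cmpT: "\<And>a b. T (cmp A a b) = pf_comp (T a) (T b)"
begin

lemma Teq: "T a = T b \<Longrightarrow> a = b" using injT by (simp add: inj_eq)

lemma zr_eq: "zr A = ovr A a a"
proof -
  have "\<forall>b. ovr A b b = ovr A a a"
    by (auto intro!: Teq simp: ovrT pf_ovr_def)
  then show ?thesis unfolding zr_def by (rule the_equality) auto
qed

lemma T_zr: "T (zr A) = Map.empty"
  unfolding zr_eq[of undefined] by (rule ext) (simp add: ovrT pf_ovr_def)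

lemma zr_iff: "a = zr A \<longleftrightarrow> T a = Map.empty"
  using T_zr Teq by metis

lemma T_restr: "T (restr A a b) = (\<lambda>y. if T a y = None then None else T b y)"
  by (auto simp: restr_def ovrT pf_ovr_def)

lemma leq_iff: "leq A a b \<longleftrightarrow> T a \<subseteq>\<^sub>m T b"
proof -
  have "leq A a b \<longleftrightarrow> T (restr A a b) = T a" unfolding leq_def using Teq by metis
  also have "\<dots> \<longleftrightarrow> T a \<subseteq>\<^sub>m T b"
    unfolding T_restr map_le_def fun_eq_iff
  proof (intro iffI allI ballI)
    fix y assume h: "\<forall>y. (if T a y = None then None else T b y) = T a y" and "y \<in> dom (T a)"
    then show "T a y = T b y" using h[rule_format, of y] by (cases "T a y") auto
  next
    fix y assume h: "\<forall>y\<in>dom (T a). T a y = T b y"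
    show "(if T a y = None then None else T b y) = T a y" using h by (auto simp: dom_def)
  qed
  finally show ?thesis .
qed

lemma leq_antisym: "leq A a b \<Longrightarrow> leq A b a \<Longrightarrow> a = b"
  by (simp add: leq_iff map_le_antisym Teq)

lemma atomD: "is_atom A x \<Longrightarrow> T d \<subseteq>\<^sub>m T x \<Longrightarrow> T d \<noteq> Map.empty \<Longrightarrow> d = x"
  unfolding is_atom_def leq_iff zr_iff by blast

lemma atom_nz: "is_atom A x \<Longrightarrow> T x \<noteq> Map.empty"
  unfolding is_atom_def zr_iff by blast

lemma atom_dom: assumes "is_atom A x" "dom (T x) \<inter> dom (T a) \<noteq> {}"
  shows "dom (T x) \<subseteq> dom (T a)"
proof -
  let ?d = "restr A a x"
  have le: "T ?d \<subseteq>\<^sub>m T x" unfolding T_restr map_le_def by auto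
  from assms(2) obtain y where "T x y \<noteq> None" "T a y \<noteq> None" by auto
  then have "T ?d \<noteq> Map.empty" unfolding T_restr by (metis)
  then have "?d = x" using atomD[OF assms(1) le] by blast
  then have e: "T ?d = T x" by simp
  show ?thesis
  proof
    fix y assume "y \<in> dom (T x)"
    then have "T ?d y \<noteq> None" using e by auto
    then show "y \<in> dom (T a)" unfolding T_restr by (auto split: if_splits)
  qed
qed

lemma atom_like: assumes "is_atom A x" "T e \<noteq> Map.empty" "dom (T e) = dom (T x)"
  shows "is_atom A e"
  unfolding is_atom_def
proof (intro conjI allI impI)
  show "e \<noteq> zr A" using assms(2) zr_iff by blast
  fix d assume "leq A d e \<and> d \<noteq> zr A"
  then have le: "T d \<subseteq>\<^sub>m T e" and nz: "T d \<noteq> Map.empty" using leq_iff zr_iff by auto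
  have "dom (T d) \<subseteq> dom (T x)" using le assms(3) map_le_implies_dom_le by blast
  moreover from nz have "dom (T d) \<noteq> {}" using dom_eq_empty_conv by metis
  ultimately have "dom (T x) \<inter> dom (T d) \<noteq> {}" by blast
  then have "dom (T x) \<subseteq> dom (T d)" using atom_dom[OF assms(1)] by blast
  then show "d = e" using map_le_eq[OF le] assms(3) Teq by auto
qed

lemma T_cmp: "T (cmp A x a) y = (case T x y of None \<Rightarrow> None | Some z \<Rightarrow> T a z)"
  by (simp add: cmpT pf_comp_def)

lemma cmp_zr: "cmp A x a = zr A \<longleftrightarrow> (\<forall>y z. T x y = Some z \<longrightarrow> T a z = None)"
  unfolding zr_iff by (auto simp: fun_eq_iff T_cmp split: option.splits)

lemma cmp_nz: assumes "is_atom A x" "cmp A x a \<noteq> zr A" "T x y = Some z"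
  shows "T a z \<noteq> None"
proof -
  have "dom (T (cmp A x a)) \<subseteq> dom (T x)" by (auto simp: T_cmp split: option.splits)
  moreover have "dom (T (cmp A x a)) \<noteq> {}" using assms(2) zr_iff dom_eq_empty_conv by metis
  ultimately have "dom (T x) \<inter> dom (T (cmp A x a)) \<noteq> {}" by blast
  then have "dom (T x) \<subseteq> dom (T (cmp A x a))" using atom_dom[OF assms(1)] by blast
  then show ?thesis using assms(3) by (auto simp: T_cmp)
qed

lemma cmp_atom: assumes "is_atom A x" "cmp A x a \<noteq> zr A" shows "is_atom A (cmp A x a)"
proof (rule atom_like[OF assms(1)])
  show "T (cmp A x a) \<noteq> Map.empty" using assms(2) zr_iff by auto
  show "dom (T (cmp A x a)) = dom (T x)"
    using cmp_nz[OF assms] by (auto simp: T_cmp split: option.splits)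
qed

lemma restr_zr: "restr A x a = zr A \<longleftrightarrow> (\<forall>y. T x y \<noteq> None \<longrightarrow> T a y = None)"
  unfolding zr_iff T_restr by (auto simp: fun_eq_iff)

lemma restr_nz: assumes "is_atom A x" "restr A x a \<noteq> zr A" "T x y \<noteq> None"
  shows "T a y \<noteq> None"
proof -
  have "dom (T x) \<inter> dom (T a) \<noteq> {}" using assms(2) restr_zr by auto
  then show ?thesis using atom_dom[OF assms(1)] assms(3) by blast
qed

lemma restr_atom: assumes "is_atom A x" "restr A x a \<noteq> zr A" shows "is_atom A (restr A x a)"
proof (rule atom_like[OF assms(1)])
  show "T (restr A x a) \<noteq> Map.empty" using assms(2) zr_iff by auto
  show "dom (T (restr A x a)) = dom (T x)"
    using restr_nz[OF assms] unfolding T_restr by (auto split: if_splits)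
qed


lemma cmp_cases: assumes "is_atom A x"
  shows "(cmp A x a = zr A \<and> (\<forall>y z. T x y = Some z \<longrightarrow> T a z = None))
       \<or> (cmp A x a \<noteq> zr A \<and> (\<forall>y z. T x y = Some z \<longrightarrow> T a z \<noteq> None))"
  using cmp_zr cmp_nz[OF assms] by blast

lemma restr_cases: assumes "is_atom A x"
  shows "(restr A x a = zr A \<and> (\<forall>y. T x y \<noteq> None \<longrightarrow> T a y = None))
       \<or> (restr A x a \<noteq> zr A \<and> (\<forall>y. T x y \<noteq> None \<longrightarrow> T a y \<noteq> None))"
  using restr_zr restr_nz[OF assms] by blast

lemma T_restr': "T (restr A x a) y = (if T x y = None then None else T a y)"
  by (simp add: T_restr)

lemmas simps = T_cmp T_restr' pf_ovr_def pf_comp_def pf_meet_def pf_upd_def pf_join_def pf_D_def pf_A_def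


lemma CN: assumes "is_atom A x" "cmp A x a \<noteq> zr A"
  shows "(case T x y of None \<Rightarrow> True | Some z \<Rightarrow> T a z \<noteq> None)"
proof (cases "T x y")
  case (Some z) then show ?thesis using cmp_nz[OF assms Some] by simp
qed simp
lemma CZ: assumes "cmp A x a = zr A"
  shows "(case T x y of None \<Rightarrow> True | Some z \<Rightarrow> T a z = None)"
proof (cases "T x y")
  case (Some z) then show ?thesis using assms[unfolded cmp_zr] by simp
qed simp
lemma RN': assumes "is_atom A x" "restr A x a \<noteq> zr A" shows "T x y = None \<or> T a y \<noteq> None"
  using restr_nz[OF assms, of y] by (cases "T x y = None") simp_all
lemma RZ': assumes "restr A x a = zr A" shows "T x y = None \<or> T a y = None"
  using assms[unfolded restr_zr] by (cases "T x y = None") simp_all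

lemma zr_comp: "cmp A (zr A) b = zr A"
  unfolding zr_iff by (rule ext) (simp add: T_cmp T_zr)

lemma ranX: "(case T x y of None \<Rightarrow> True | Some z \<Rightarrow> z \<in> X)"
proof (cases "T x y")
  case (Some z)
  then have "z \<in> ran (T x)" unfolding ran_def by blast
  then show ?thesis using pfT[of x] Some unfolding pfun_on_def by auto
qed simp

lemma C_ovr1:
  assumes "is_atom A x" "cmp A x a \<noteq> zr A"
  shows "cmp A x (ovr A a b) = zr A"
  unfolding zr_iff apply (rule ext)
  subgoal for y using CN[OF assms(1,2), where y=y] by (cases "T x y") (auto simp: simps ovrT split: option.splits if_splits)
  done

lemma C_ovr2:
  assumes "cmp A x a = zr A"
  shows "cmp A x (ovr A a b) = cmp A x b"
  apply (intro Teq ext)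
  subgoal for y using CZ[OF assms(1), where y=y] by (cases "T x y") (auto simp: simps ovrT split: option.splits if_splits)
  done

lemma R_ovr1:
  assumes "is_atom A x" "restr A x a \<noteq> zr A"
  shows "restr A x (ovr A a b) = zr A"
  unfolding zr_iff apply (rule ext)
  subgoal for y using RN'[OF assms(1,2), where y=y] by (cases "T x y") (auto simp: simps ovrT split: option.splits if_splits)
  done

lemma R_ovr2:
  assumes "restr A x a = zr A"
  shows "restr A x (ovr A a b) = restr A x b"
  apply (intro Teq ext)
  subgoal for y using RZ'[OF assms(1), where y=y] by (cases "T x y") (auto simp: simps ovrT split: option.splits if_splits)
  done

lemma C_comp: "cmp A x (cmp A a b) = cmp A (cmp A x a) b"
  apply (intro Teq ext)
  subgoal for y  by (cases "T x y") (auto simp: simps  split: option.splits if_splits)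
  done

lemma R_comp: "restr A x (cmp A a b) = cmp A (restr A x a) b"
  apply (intro Teq ext)
  subgoal for y  by (cases "T x y") (auto simp: simps  split: option.splits if_splits)
  done

lemma C_upd1:
  assumes "T (upd A a b) = pf_upd (T a) (T b)" "cmp A x a = zr A"
  shows "cmp A x (upd A a b) = zr A"
  unfolding zr_iff apply (rule ext)
  subgoal for y using CZ[OF assms(2), where y=y] by (cases "T x y") (auto simp: simps assms(1) split: option.splits if_splits)
  done

lemma C_upd2:
  assumes "is_atom A x" "T (upd A a b) = pf_upd (T a) (T b)" "cmp A x a \<noteq> zr A" "cmp A x b = zr A"
  shows "cmp A x (upd A a b) = cmp A x a"
  apply (intro Teq ext)
  subgoal for y using CN[OF assms(1,3), where y=y] CZ[OF assms(4), where y=y] by (cases "T x y") (auto simp: simps assms(2) split: option.splits if_splits)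
  done

lemma C_upd3:
  assumes "is_atom A x" "T (upd A a b) = pf_upd (T a) (T b)" "cmp A x a \<noteq> zr A" "cmp A x b \<noteq> zr A"
  shows "cmp A x (upd A a b) = cmp A x b"
  apply (intro Teq ext)
  subgoal for y using CN[OF assms(1,3), where y=y] CN[OF assms(1,4), where y=y] by (cases "T x y") (auto simp: simps assms(2) split: option.splits if_splits)
  done

lemma R_upd1:
  assumes "T (upd A a b) = pf_upd (T a) (T b)" "restr A x a = zr A"
  shows "restr A x (upd A a b) = zr A"
  unfolding zr_iff apply (rule ext)
  subgoal for y using RZ'[OF assms(2), where y=y] by (cases "T x y") (auto simp: simps assms(1) split: option.splits if_splits)
  done

lemma R_upd2:
  assumes "is_atom A x" "T (upd A a b) = pf_upd (T a) (T b)" "restr A x a \<noteq> zr A" "restr A x b = zr A"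
  shows "restr A x (upd A a b) = restr A x a"
  apply (intro Teq ext)
  subgoal for y using RN'[OF assms(1,3), where y=y] RZ'[OF assms(4), where y=y] by (cases "T x y") (auto simp: simps assms(2) split: option.splits if_splits)
  done

lemma R_upd3:
  assumes "is_atom A x" "T (upd A a b) = pf_upd (T a) (T b)" "restr A x a \<noteq> zr A" "restr A x b \<noteq> zr A"
  shows "restr A x (upd A a b) = restr A x b"
  apply (intro Teq ext)
  subgoal for y using RN'[OF assms(1,3), where y=y] RN'[OF assms(1,4), where y=y] by (cases "T x y") (auto simp: simps assms(2) split: option.splits if_splits)
  done

lemma C_join1:
  assumes "is_atom A x" "T (pjn A a b) = pf_join (T a) (T b)" "cmp A x a \<noteq> zr A"
  shows "cmp A x (pjn A a b) = cmp A x a"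
  apply (intro Teq ext)
  subgoal for y using CN[OF assms(1,3), where y=y] by (cases "T x y") (auto simp: simps assms(2) split: option.splits if_splits)
  done

lemma C_join2:
  assumes "T (pjn A a b) = pf_join (T a) (T b)" "cmp A x a = zr A"
  shows "cmp A x (pjn A a b) = cmp A x b"
  apply (intro Teq ext)
  subgoal for y using CZ[OF assms(2), where y=y] by (cases "T x y") (auto simp: simps assms(1) split: option.splits if_splits)
  done

lemma R_join1:
  assumes "is_atom A x" "T (pjn A a b) = pf_join (T a) (T b)" "restr A x a \<noteq> zr A"
  shows "restr A x (pjn A a b) = restr A x a"
  apply (intro Teq ext)
  subgoal for y using RN'[OF assms(1,3), where y=y] by (cases "T x y") (auto simp: simps assms(2) split: option.splits if_splits)
  done

lemma R_join2:
  assumes "T (pjn A a b) = pf_join (T a) (T b)" "restr A x a = zr A"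
  shows "restr A x (pjn A a b) = restr A x b"
  apply (intro Teq ext)
  subgoal for y using RZ'[OF assms(2), where y=y] by (cases "T x y") (auto simp: simps assms(1) split: option.splits if_splits)
  done

lemma C_dom1:
  assumes "is_atom A x" "T (dm A a) = pf_D (T a)" "cmp A x a \<noteq> zr A"
  shows "cmp A x (dm A a) = x"
  apply (intro Teq ext)
  subgoal for y using CN[OF assms(1,3), where y=y] by (cases "T x y") (auto simp: simps assms(2) split: option.splits if_splits)
  done

lemma C_dom2:
  assumes "T (dm A a) = pf_D (T a)" "cmp A x a = zr A"
  shows "cmp A x (dm A a) = zr A"
  unfolding zr_iff apply (rule ext)
  subgoal for y using CZ[OF assms(2), where y=y] by (cases "T x y") (auto simp: simps assms(1) split: option.splits if_splits)
  done

lemma C_adom1: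
  assumes "is_atom A x" "T (adm A a) = pf_A X (T a)" "cmp A x a \<noteq> zr A"
  shows "cmp A x (adm A a) = zr A"
  unfolding zr_iff apply (rule ext)
  subgoal for y using CN[OF assms(1,3), where y=y] by (cases "T x y") (auto simp: simps assms(2) split: option.splits if_splits)
  done

lemma C_adom2:
  assumes "T (adm A a) = pf_A X (T a)" "cmp A x a = zr A"
  shows "cmp A x (adm A a) = x"
  apply (intro Teq ext)
  subgoal for y using CZ[OF assms(2), where y=y] ranX[of x, where y=y] by (cases "T x y") (auto simp: simps assms(1) split: option.splits if_splits)
  done


lemma C_meet1: assumes "T (mt A a b) = pf_meet (T a) (T b)" "cmp A x a = cmp A x b"
  shows "cmp A x (mt A a b) = cmp A x a"
proof -
  have h: "T a z = T b z" if "T x y = Some z" for y z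
  proof -
    have "T (cmp A x a) y = T (cmp A x b) y" using assms(2) by simp
    then show ?thesis using that by (simp add: T_cmp)
  qed
  show ?thesis
    apply (intro Teq ext)
    subgoal for y using h[of y] by (cases "T x y") (auto simp: simps assms(1))
    done
qed
lemma C_meet2: assumes "is_atom A x" "T (mt A a b) = pf_meet (T a) (T b)" "cmp A x a \<noteq> cmp A x b"
  shows "cmp A x (mt A a b) = zr A"
proof (rule ccontr)
  assume c: "cmp A x (mt A a b) \<noteq> zr A"
  have "cmp A x a = cmp A x b"
    apply (intro Teq ext)
    subgoal for y using CN[OF assms(1) c, where y=y] by (cases "T x y") (auto simp: simps assms(2) split: if_splits)
    done
  then show False using assms(3) by simp
qed
lemma R_meet1: assumes "T (mt A a b) = pf_meet (T a) (T b)" "restr A x a = restr A x b"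
  shows "restr A x (mt A a b) = restr A x a"
proof -
  have h: "T a y = T b y" if "T x y \<noteq> None" for y
  proof -
    have "T (restr A x a) y = T (restr A x b) y" using assms(2) by simp
    then show ?thesis using that by (simp add: T_restr')
  qed
  show ?thesis
    apply (intro Teq ext)
    subgoal for y using h[of y] by (cases "T x y") (auto simp: simps assms(1))
    done
qed
lemma R_meet2: assumes "is_atom A x" "T (mt A a b) = pf_meet (T a) (T b)" "restr A x a \<noteq> restr A x b"
  shows "restr A x (mt A a b) = zr A"
proof (rule ccontr)
  assume c: "restr A x (mt A a b) \<noteq> zr A"
  have "restr A x a = restr A x b"
    apply (intro Teq ext)
    subgoal for y using RN'[OF assms(1) c, where y=y] by (cases "T x y") (auto simp: simps assms(2) split: if_splits)
    done
  then show False using assms(3) by simp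
qed

lemma C_mono: assumes "is_atom A x" "leq A s j" "cmp A x s \<noteq> zr A" shows "cmp A x s = cmp A x j"
proof -
  have le: "T (cmp A x s) \<subseteq>\<^sub>m T (cmp A x j)" using assms(2) unfolding leq_iff
    by (auto simp: map_le_def T_cmp dom_def split: option.splits)
  have "cmp A x j \<noteq> zr A" using le assms(3) unfolding zr_iff by (metis map_le_antisym map_le_empty)
  then have "is_atom A (cmp A x j)" using cmp_atom[OF assms(1)] by blast
  then show ?thesis using atomD le assms(3) zr_iff by blast
qed
lemma R_mono: assumes "is_atom A x" "leq A s j" "restr A x s \<noteq> zr A" shows "restr A x s = restr A x j"
proof -
  have le: "T (restr A x s) \<subseteq>\<^sub>m T (restr A x j)" using assms(2) unfolding leq_iff
    by (auto simp: map_le_def T_restr' dom_def)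
  have "restr A x j \<noteq> zr A" using le assms(3) unfolding zr_iff by (metis map_le_antisym map_le_empty)
  then have "is_atom A (restr A x j)" using restr_atom[OF assms(1)] by blast
  then show ?thesis using atomD le assms(3) zr_iff by blast
qed

end

context rp begin

lemma restr_eq_iff: "restr A a b = b \<longleftrightarrow> dom (T b) \<subseteq> dom (T a)"
proof
  assume h: "restr A a b = b"
  show "dom (T b) \<subseteq> dom (T a)"
  proof
    fix y assume "y \<in> dom (T b)"
    then have "T (restr A a b) y \<noteq> None" using h by auto
    then show "y \<in> dom (T a)" by (auto simp: T_restr' split: if_splits)
  qed
next
  assume h: "dom (T b) \<subseteq> dom (T a)"
  show "restr A a b = b"
  proof (intro Teq ext)
    fix y show "T (restr A a b) y = T b y"
    proof (cases "T a y = None")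
      case True then have "y \<notin> dom (T b)" using h by auto
      then show ?thesis using True by (simp add: T_restr' domIff)
    qed (auto simp: T_restr')
  qed
qed

lemma sim_iff: "sim A a b \<longleftrightarrow> dom (T a) = dom (T b)"
  unfolding sim_def restr_eq_iff by auto

lemma equiv_sim: "equiv (atoms A) (sim_rel A)"
  unfolding equiv_def refl_on_def sym_def trans_def sim_rel_def sim_iff by auto

lemma restr_sim: assumes d: "dom (T x) = dom (T y)" shows "restr A x a = restr A y a"
proof -
  have "(T x z = None) = (T y z = None)" for z using d by (metis domIff)
  then show ?thesis by (intro Teq ext) (simp add: T_restr')
qed

abbreviation Q where "Q \<equiv> atoms A // sim_rel A"

lemma Q_rep: assumes "c \<in> Q"
  shows "(SOME x. x \<in> c) \<in> atoms A" "\<And>y. y \<in> c \<Longrightarrow> dom (T y) = dom (T (SOME x. x \<in> c))"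
proof -
  obtain x where x: "x \<in> atoms A" "c = sim_rel A `` {x}" using assms by (auto elim: quotientE)
  have "x \<in> c" using x equiv_sim by (simp add: sim_rel_def sim_iff)
  then have r: "(SOME x. x \<in> c) \<in> c" by (rule someI)
  have mem: "y \<in> c \<longleftrightarrow> y \<in> atoms A \<and> dom (T x) = dom (T y)" for y
    using x by (auto simp: sim_rel_def sim_iff)
  show "(SOME x. x \<in> c) \<in> atoms A" using r mem by blast
  show "\<And>y. y \<in> c \<Longrightarrow> dom (T y) = dom (T (SOME x. x \<in> c))"
  proof -
    fix y assume "y \<in> c"
    then have "dom (T x) = dom (T y)" using mem by blast
    moreover have "dom (T x) = dom (T (SOME x. x \<in> c))" using r mem[of "SOME x. x \<in> c"] by blast
    ultimately show "dom (T y) = dom (T (SOME x. x \<in> c))" by simp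
  qed
qed

lemma Q_class: assumes "x \<in> atoms A"
  shows "sim_rel A `` {x} \<in> Q" "dom (T (SOME y. y \<in> sim_rel A `` {x})) = dom (T x)"
proof -
  show q: "sim_rel A `` {x} \<in> Q" using assms by (rule quotientI)
  have "x \<in> sim_rel A `` {x}" using assms by (simp add: sim_rel_def sim_iff)
  then show "dom (T (SOME y. y \<in> sim_rel A `` {x})) = dom (T x)" using Q_rep(2)[OF q] by simp
qed

lemma atoms_iff: "x \<in> atoms A \<longleftrightarrow> is_atom A x" by (simp add: atoms_def)

lemma th1_Inl: "theta1 A a (Inl x) = (if x \<in> atoms A \<and> cmp A x a \<noteq> zr A then Some (Inl (cmp A x a)) else None)"
  by (simp add: theta1_def)
lemma th1_Inr: "theta1 A a (Inr c) = (if c \<in> Q \<and> restr A (SOME x. x \<in> c) a \<noteq> zr A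
               then Some (Inl (restr A (SOME x. x \<in> c) a)) else None)"
  by (simp add: theta1_def)

lemma th1_class: assumes "x \<in> atoms A"
  shows "theta1 A a (Inr (sim_rel A `` {x})) = (if restr A x a \<noteq> zr A then Some (Inl (restr A x a)) else None)"
  using Q_class[OF assms] restr_sim[of "SOME y. y \<in> sim_rel A `` {x}" x a] by (simp add: th1_Inr)

end

context rp begin

lemma th1_ovr:
  shows "theta1 A (ovr A a b) = pf_ovr (theta1 A a) (theta1 A b)"
proof (rule ext)
  fix p show "theta1 A (ovr A a b) p = pf_ovr (theta1 A a) (theta1 A b) p"
  proof (cases p)
    case (Inl x) show ?thesis
    proof (cases "x \<in> atoms A")
      case True then have xa: "is_atom A x" by (simp add: atoms_iff)
      show ?thesis using Inl True C_ovr1[OF xa, of a b] C_ovr2[of x a b]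
        by (auto simp: th1_Inl pf_ovr_def)
    qed (simp add: Inl th1_Inl pf_ovr_def)
  next
    case (Inr c) show ?thesis
    proof (cases "c \<in> Q")
      case True
      define r where "r = (SOME x. x \<in> c)"
      have ra: "is_atom A r" using Q_rep(1)[OF True] atoms_iff r_def by blast
      have ea: "theta1 A u (Inr c) = (if restr A r u \<noteq> zr A then Some (Inl (restr A r u)) else None)" for u
        using True by (simp add: th1_Inr r_def)
      show ?thesis using True R_ovr1[OF ra, of a b] R_ovr2[of r a b] unfolding Inr
        by (auto simp: ea th1_Inl pf_ovr_def)
    qed (simp add: Inr th1_Inr pf_ovr_def)
  qed
qed

lemma th2_ovr:
  shows "theta2 A (ovr A a b) = pf_ovr (theta2 A a) (theta2 A b)"
proof (rule ext)
  fix x show "theta2 A (ovr A a b) x = pf_ovr (theta2 A a) (theta2 A b) x"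
  proof (cases "x \<in> atoms A")
    case True then have xa: "is_atom A x" by (simp add: atoms_iff)
    show ?thesis using True C_ovr1[OF xa, of a b] C_ovr2[of x a b]
      by (auto simp: theta2_def pf_ovr_def)
  qed (simp add: theta2_def pf_ovr_def)
qed

lemma th1_cmp:
  shows "theta1 A (cmp A a b) = pf_comp (theta1 A a) (theta1 A b)"
proof (rule ext)
  fix p show "theta1 A (cmp A a b) p = pf_comp (theta1 A a) (theta1 A b) p"
  proof (cases p)
    case (Inl x) show ?thesis
    proof (cases "x \<in> atoms A")
      case True then have xa: "is_atom A x" by (simp add: atoms_iff)
      show ?thesis using Inl True C_comp[of x a b] zr_comp cmp_atom[OF xa, of a] atoms_iff
        by (auto simp: th1_Inl pf_comp_def)
    qed (simp add: Inl th1_Inl pf_comp_def)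
  next
    case (Inr c) show ?thesis
    proof (cases "c \<in> Q")
      case True
      define r where "r = (SOME x. x \<in> c)"
      have ra: "is_atom A r" using Q_rep(1)[OF True] atoms_iff r_def by blast
      have ea: "theta1 A u (Inr c) = (if restr A r u \<noteq> zr A then Some (Inl (restr A r u)) else None)" for u
        using True by (simp add: th1_Inr r_def)
      show ?thesis using True R_comp[of r a b] zr_comp restr_atom[OF ra, of a] atoms_iff unfolding Inr
        by (auto simp: ea th1_Inl pf_comp_def)
    qed (simp add: Inr th1_Inr pf_comp_def)
  qed
qed

lemma th2_cmp:
  shows "theta2 A (cmp A a b) = pf_comp (theta2 A a) (theta2 A b)"
proof (rule ext)
  fix x show "theta2 A (cmp A a b) x = pf_comp (theta2 A a) (theta2 A b) x"
  proof (cases "x \<in> atoms A")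
    case True then have xa: "is_atom A x" by (simp add: atoms_iff)
    show ?thesis using True C_comp[of x a b] zr_comp cmp_atom[OF xa, of a] atoms_iff
      by (auto simp: theta2_def pf_comp_def)
  qed (simp add: theta2_def pf_comp_def)
qed

lemma th1_mt:
  assumes hm: "\<And>a b. T (mt A a b) = pf_meet (T a) (T b)"
  shows "theta1 A (mt A a b) = pf_meet (theta1 A a) (theta1 A b)"
proof (rule ext)
  fix p show "theta1 A (mt A a b) p = pf_meet (theta1 A a) (theta1 A b) p"
  proof (cases p)
    case (Inl x) show ?thesis
    proof (cases "x \<in> atoms A")
      case True then have xa: "is_atom A x" by (simp add: atoms_iff)
      show ?thesis using Inl True C_meet1[OF hm] C_meet2[OF xa hm]
        by (cases "cmp A x a = cmp A x b") (auto simp: th1_Inl pf_meet_def)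
    qed (simp add: Inl th1_Inl pf_meet_def)
  next
    case (Inr c) show ?thesis
    proof (cases "c \<in> Q")
      case True
      define r where "r = (SOME x. x \<in> c)"
      have ra: "is_atom A r" using Q_rep(1)[OF True] atoms_iff r_def by blast
      have ea: "theta1 A u (Inr c) = (if restr A r u \<noteq> zr A then Some (Inl (restr A r u)) else None)" for u
        using True by (simp add: th1_Inr r_def)
      show ?thesis using True R_meet1[OF hm] R_meet2[OF ra hm] unfolding Inr
        by (cases "restr A r a = restr A r b") (auto simp: ea th1_Inl pf_meet_def)
    qed (simp add: Inr th1_Inr pf_meet_def)
  qed
qed

lemma th2_mt:
  assumes hm: "\<And>a b. T (mt A a b) = pf_meet (T a) (T b)"
  shows "theta2 A (mt A a b) = pf_meet (theta2 A a) (theta2 A b)"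
proof (rule ext)
  fix x show "theta2 A (mt A a b) x = pf_meet (theta2 A a) (theta2 A b) x"
  proof (cases "x \<in> atoms A")
    case True then have xa: "is_atom A x" by (simp add: atoms_iff)
    show ?thesis using True C_meet1[OF hm] C_meet2[OF xa hm]
      by (cases "cmp A x a = cmp A x b") (auto simp: theta2_def pf_meet_def)
  qed (simp add: theta2_def pf_meet_def)
qed

lemma th1_upd:
  assumes hm: "\<And>a b. T (upd A a b) = pf_upd (T a) (T b)"
  shows "theta1 A (upd A a b) = pf_upd (theta1 A a) (theta1 A b)"
proof (rule ext)
  fix p show "theta1 A (upd A a b) p = pf_upd (theta1 A a) (theta1 A b) p"
  proof (cases p)
    case (Inl x) show ?thesis
    proof (cases "x \<in> atoms A")
      case True then have xa: "is_atom A x" by (simp add: atoms_iff)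
      show ?thesis using Inl True C_upd1[OF hm] C_upd2[OF xa hm] C_upd3[OF xa hm]
        by (auto simp: th1_Inl pf_upd_def)
    qed (simp add: Inl th1_Inl pf_upd_def)
  next
    case (Inr c) show ?thesis
    proof (cases "c \<in> Q")
      case True
      define r where "r = (SOME x. x \<in> c)"
      have ra: "is_atom A r" using Q_rep(1)[OF True] atoms_iff r_def by blast
      have ea: "theta1 A u (Inr c) = (if restr A r u \<noteq> zr A then Some (Inl (restr A r u)) else None)" for u
        using True by (simp add: th1_Inr r_def)
      show ?thesis using True R_upd1[OF hm] R_upd2[OF ra hm] R_upd3[OF ra hm] unfolding Inr
        by (auto simp: ea th1_Inl pf_upd_def)
    qed (simp add: Inr th1_Inr pf_upd_def)
  qed
qed

lemma th2_upd:
  assumes hm: "\<And>a b. T (upd A a b) = pf_upd (T a) (T b)"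
  shows "theta2 A (upd A a b) = pf_upd (theta2 A a) (theta2 A b)"
proof (rule ext)
  fix x show "theta2 A (upd A a b) x = pf_upd (theta2 A a) (theta2 A b) x"
  proof (cases "x \<in> atoms A")
    case True then have xa: "is_atom A x" by (simp add: atoms_iff)
    show ?thesis using True C_upd1[OF hm] C_upd2[OF xa hm] C_upd3[OF xa hm]
      by (auto simp: theta2_def pf_upd_def)
  qed (simp add: theta2_def pf_upd_def)
qed

lemma th1_pjn:
  assumes hm: "\<And>a b. T (pjn A a b) = pf_join (T a) (T b)"
  shows "theta1 A (pjn A a b) = pf_join (theta1 A a) (theta1 A b)"
proof (rule ext)
  fix p show "theta1 A (pjn A a b) p = pf_join (theta1 A a) (theta1 A b) p"
  proof (cases p)
    case (Inl x) show ?thesis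
    proof (cases "x \<in> atoms A")
      case True then have xa: "is_atom A x" by (simp add: atoms_iff)
      show ?thesis using Inl True C_join1[OF xa hm] C_join2[OF hm]
        by (auto simp: th1_Inl pf_join_def)
    qed (simp add: Inl th1_Inl pf_join_def)
  next
    case (Inr c) show ?thesis
    proof (cases "c \<in> Q")
      case True
      define r where "r = (SOME x. x \<in> c)"
      have ra: "is_atom A r" using Q_rep(1)[OF True] atoms_iff r_def by blast
      have ea: "theta1 A u (Inr c) = (if restr A r u \<noteq> zr A then Some (Inl (restr A r u)) else None)" for u
        using True by (simp add: th1_Inr r_def)
      show ?thesis using True R_join1[OF ra hm] R_join2[OF hm] unfolding Inr
        by (auto simp: ea th1_Inl pf_join_def)
    qed (simp add: Inr th1_Inr pf_join_def)
  qed
qed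

lemma th2_pjn:
  assumes hm: "\<And>a b. T (pjn A a b) = pf_join (T a) (T b)"
  shows "theta2 A (pjn A a b) = pf_join (theta2 A a) (theta2 A b)"
proof (rule ext)
  fix x show "theta2 A (pjn A a b) x = pf_join (theta2 A a) (theta2 A b) x"
  proof (cases "x \<in> atoms A")
    case True then have xa: "is_atom A x" by (simp add: atoms_iff)
    show ?thesis using True C_join1[OF xa hm] C_join2[OF hm]
      by (auto simp: theta2_def pf_join_def)
  qed (simp add: theta2_def pf_join_def)
qed

end

context rp begin

lemma th2_dm: assumes hm: "\<And>a. T (dm A a) = pf_D (T a)"
  shows "theta2 A (dm A a) = pf_D (theta2 A a)"
proof (rule ext)
  fix x show "theta2 A (dm A a) x = pf_D (theta2 A a) x"
  proof (cases "x \<in> atoms A")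
    case True then have xa: "is_atom A x" by (simp add: atoms_iff)
    then have "x \<noteq> zr A" by (simp add: is_atom_def)
    then show ?thesis using True C_dom1[OF xa hm] C_dom2[OF hm]
      by (cases "cmp A x a = zr A") (auto simp: theta2_def pf_D_def)
  qed (simp add: theta2_def pf_D_def)
qed

lemma th2_adm: assumes hm: "\<And>a. T (adm A a) = pf_A X (T a)"
  shows "theta2 A (adm A a) = pf_A (atoms A) (theta2 A a)"
proof (rule ext)
  fix x show "theta2 A (adm A a) x = pf_A (atoms A) (theta2 A a) x"
  proof (cases "x \<in> atoms A")
    case True then have xa: "is_atom A x" by (simp add: atoms_iff)
    then have "x \<noteq> zr A" by (simp add: is_atom_def)
    then show ?thesis using True C_adom1[OF xa hm] C_adom2[OF hm]
      by (cases "cmp A x a = zr A") (auto simp: theta2_def pf_A_def)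
  qed (simp add: theta2_def pf_A_def)
qed

lemma sep_leq: assumes "separating A" "\<And>c. is_atom A c \<Longrightarrow> leq A c a \<Longrightarrow> leq A c b"
  shows "leq A a b"
  using assms unfolding separating_def by blast

lemma th1_inj: assumes sep: "separating A" shows "inj (theta1 A)"
proof (rule injI)
  fix a b assume e: "theta1 A a = theta1 A b"
  have r: "restr A c a = restr A c b" if c: "is_atom A c" for c
  proof -
    have ca: "c \<in> atoms A" using c by (simp add: atoms_iff)
    have "theta1 A a (Inr (sim_rel A `` {c})) = theta1 A b (Inr (sim_rel A `` {c}))" using e by simp
    then show ?thesis unfolding th1_class[OF ca] by (auto split: if_splits)
  qed
  have "leq A a b" by (rule sep_leq[OF sep]) (use r in \<open>simp add: leq_def\<close>)
  moreover have "leq A b a" by (rule sep_leq[OF sep]) (use r in \<open>simp add: leq_def\<close>)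
  ultimately show "a = b" by (rule leq_antisym)
qed

lemma th2_inj: assumes sep: "separating A"
  and De: "\<And>c. is_atom A c \<Longrightarrow> \<exists>e. T e = pf_D (T c)"
  shows "inj (theta2 A)"
proof (rule injI)
  fix a b assume e: "theta2 A a = theta2 A b"
  have r: "leq A c b" if c: "is_atom A c" "leq A c a" and ee: "theta2 A a = theta2 A b" for a b c
  proof -
    obtain d where d: "T d = pf_D (T c)" using De[OF c(1)] by blast
    have dn: "T d \<noteq> Map.empty" using atom_nz[OF c(1)] unfolding d pf_D_def by (metis not_None_eq)
    have dd: "dom (T d) = dom (T c)" unfolding d pf_D_def by (auto split: if_splits)
    have da: "is_atom A d" by (rule atom_like[OF c(1) dn dd])
    have le: "T c \<subseteq>\<^sub>m T a" using c(2) leq_iff by blast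
    have "cmp A d a = c"
    proof (intro Teq ext)
      fix y show "T (cmp A d a) y = T c y"
        using le by (cases "T c y") (auto simp: T_cmp d pf_D_def map_le_def dom_def)
    qed
    moreover have "c \<noteq> zr A" using c(1) by (simp add: is_atom_def)
    ultimately have "theta2 A a d = Some c" using da by (simp add: theta2_def atoms_iff)
    then have "theta2 A b d = Some c" using ee by simp
    then have cb: "cmp A d b = c" by (simp add: theta2_def split: if_splits)
    show "leq A c b" unfolding leq_iff map_le_def
    proof
      fix y assume "y \<in> dom (T c)"
      then obtain v where v: "T c y = Some v" by auto
      have "T (cmp A d b) y = T c y" using cb by simp
      then show "T c y = T b y" using v by (simp add: T_cmp d pf_D_def)
    qed
  qed
  have "leq A a b" by (rule sep_leq[OF sep]) (use r e in blast)
  moreover have "leq A b a" by (rule sep_leq[OF sep]) (use r e in metis)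
  ultimately show "a = b" by (rule leq_antisym)
qed

lemma th1_pf: "pfun_on (base1 A) (theta1 A a)"
  unfolding pfun_on_def
proof
  show "dom (theta1 A a) \<subseteq> base1 A"
  proof
    fix p assume "p \<in> dom (theta1 A a)"
    then show "p \<in> base1 A"
      by (cases p) (auto simp: th1_Inl th1_Inr base1_def split: if_splits)
  qed
  show "ran (theta1 A a) \<subseteq> base1 A"
  proof
    fix q assume "q \<in> ran (theta1 A a)"
    then obtain p where p: "theta1 A a p = Some q" by (auto simp: ran_def)
    show "q \<in> base1 A"
    proof (cases p)
      case (Inl x)
      then have "x \<in> atoms A" "cmp A x a \<noteq> zr A" "q = Inl (cmp A x a)" using p
        by (auto simp: th1_Inl split: if_splits)
      then show ?thesis using cmp_atom by (auto simp: base1_def atoms_iff)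
    next
      case (Inr c)
      then have "c \<in> Q" "restr A (SOME x. x \<in> c) a \<noteq> zr A" "q = Inl (restr A (SOME x. x \<in> c) a)" using p
        by (auto simp: th1_Inr split: if_splits)
      then show ?thesis using restr_atom Q_rep(1) by (auto simp: base1_def atoms_iff)
    qed
  qed
qed

lemma th2_pf: "pfun_on (atoms A) (theta2 A a)"
  unfolding pfun_on_def
  by (auto simp: theta2_def ran_def dom_def atoms_iff cmp_atom split: if_splits)

end

lemma pg_union: "(\<And>p q. f p = Some q \<longleftrightarrow> (\<exists>s\<in>S. g s p = Some q)) \<Longrightarrow> pgraph f = (\<Union>s\<in>S. pgraph (g s))"
  by (auto simp: pgraph_def)
lemma pg_inter: "(\<And>p q. f p = Some q \<longleftrightarrow> (\<forall>s\<in>S. g s p = Some q)) \<Longrightarrow> pgraph f = (\<Inter>s\<in>S. pgraph (g s))"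
  by (auto simp: pgraph_def)

context rp begin

lemma leq_zr: "leq A x (zr A) \<Longrightarrow> x = zr A"
  by (rule leq_antisym) (auto simp: leq_iff T_zr)

lemma leq_refl: "leq A x x" by (simp add: leq_iff)

lemma no_zr_lub: assumes "is_lub A U j" "\<forall>t\<in>U. t = zr A" shows "j = zr A"
proof -
  have "\<forall>t\<in>U. leq A t (zr A)" using assms(2) leq_refl by auto
  then show ?thesis using assms(1) leq_zr by (auto simp: is_lub_def)
qed

lemma cmp_join_ex: assumes cj: "cld_joins A" and lub: "is_lub A S j" and nz: "cmp A x j \<noteq> zr A"
  shows "\<exists>s\<in>S. cmp A x s \<noteq> zr A"
proof (rule ccontr)
  assume "\<not> ?thesis"
  then have "\<forall>t\<in>(\<lambda>s. cmp A x s) ` S. t = zr A" by auto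
  moreover have "is_lub A ((\<lambda>s. cmp A x s) ` S) (cmp A x j)" using cj lub by (simp add: cld_joins_def)
  ultimately show False using no_zr_lub nz by blast
qed

lemma restr_join_ex: assumes lub: "is_lub A S j" and nz: "restr A r j \<noteq> zr A"
  shows "\<exists>s\<in>S. restr A r s \<noteq> zr A"
proof (rule ccontr)
  assume "\<not> ?thesis"
  then have z: "\<And>s. s \<in> S \<Longrightarrow> restr A r s = zr A" by auto
  let ?u = "ovr A r j"
  have "leq A s ?u" if s: "s \<in> S" for s
    unfolding leq_iff map_le_def
  proof
    fix y assume y: "y \<in> dom (T s)"
    have "T s \<subseteq>\<^sub>m T j" using lub s by (simp add: is_lub_def leq_iff)
    then have "T s y = T j y" using y by (simp add: map_le_def)
    moreover have "T r y = None" using RZ'[OF z[OF s], of y] y by auto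
    ultimately show "T s y = T ?u y" by (simp add: ovrT pf_ovr_def)
  qed
  then have "leq A j ?u" using lub by (simp add: is_lub_def)
  then have le: "T j \<subseteq>\<^sub>m T ?u" by (simp add: leq_iff)
  have "restr A r j = zr A" unfolding restr_zr
  proof (intro allI impI)
    fix y assume "T r y \<noteq> None"
    then have "T ?u y = None" by (auto simp: ovrT pf_ovr_def)
    then show "T j y = None" using le by (auto simp: map_le_def dom_def)
  qed
  then show False using nz by simp
qed

lemma th1_join: assumes cj: "cld_joins A" shows "join_complete A (theta1 A)"
  unfolding join_complete_def
proof (intro allI impI)
  fix S j assume lub: "is_lub A S j"
  have ub: "leq A s j" if "s \<in> S" for s using lub that by (simp add: is_lub_def)
  show "pgraph (theta1 A j) = (\<Union>s\<in>S. pgraph (theta1 A s))"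
  proof (rule pg_union)
    fix p q show "theta1 A j p = Some q \<longleftrightarrow> (\<exists>s\<in>S. theta1 A s p = Some q)"
    proof (cases p)
      case (Inl x)
      show ?thesis
      proof (cases "x \<in> atoms A")
        case True then have xa: "is_atom A x" by (simp add: atoms_iff)
        show ?thesis
        proof
          assume "theta1 A j p = Some q"
          then have nz: "cmp A x j \<noteq> zr A" and q: "q = Inl (cmp A x j)" using Inl by (auto simp: th1_Inl split: if_splits)
          obtain s where s: "s \<in> S" "cmp A x s \<noteq> zr A" using cmp_join_ex[OF cj lub nz] by blast
          have "cmp A x s = cmp A x j" using C_mono[OF xa ub[OF s(1)] s(2)] .
          then have "theta1 A s p = Some q" using s(2) Inl True q by (simp add: th1_Inl)
          then show "\<exists>s\<in>S. theta1 A s p = Some q" using s(1) by blast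
        next
          assume "\<exists>s\<in>S. theta1 A s p = Some q"
          then obtain s where s: "s \<in> S" "theta1 A s p = Some q" by blast
          then have nz: "cmp A x s \<noteq> zr A" and q: "q = Inl (cmp A x s)" using Inl by (auto simp: th1_Inl split: if_splits)
          have "cmp A x s = cmp A x j" using C_mono[OF xa ub[OF s(1)] nz] .
          then show "theta1 A j p = Some q" using nz q Inl True by (simp add: th1_Inl)
        qed
      qed (simp add: Inl th1_Inl)
    next
      case (Inr c)
      show ?thesis
      proof (cases "c \<in> Q")
        case True
        define r where "r = (SOME x. x \<in> c)"
        have ra: "is_atom A r" using Q_rep(1)[OF True] unfolding atoms_iff r_def .
        have ea: "theta1 A u (Inr c) = (if restr A r u \<noteq> zr A then Some (Inl (restr A r u)) else None)" for u
          using True by (simp add: th1_Inr r_def)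
        show ?thesis
        proof
          assume "theta1 A j p = Some q"
          then have nz: "restr A r j \<noteq> zr A" and q: "q = Inl (restr A r j)" using Inr by (auto simp: ea split: if_splits)
          obtain s where s: "s \<in> S" "restr A r s \<noteq> zr A" using restr_join_ex[OF lub nz] by blast
          have "restr A r s = restr A r j" using R_mono[OF ra ub[OF s(1)] s(2)] .
          then have "theta1 A s p = Some q" using s(2) Inr q by (simp add: ea)
          then show "\<exists>s\<in>S. theta1 A s p = Some q" using s(1) by blast
        next
          assume "\<exists>s\<in>S. theta1 A s p = Some q"
          then obtain s where s: "s \<in> S" "theta1 A s p = Some q" by blast
          then have nz: "restr A r s \<noteq> zr A" and q: "q = Inl (restr A r s)" using Inr by (auto simp: ea split: if_splits)
          have "restr A r s = restr A r j" using R_mono[OF ra ub[OF s(1)] nz] .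
          then show "theta1 A j p = Some q" using nz q Inr by (simp add: ea)
        qed
      qed (simp add: Inr th1_Inr)
    qed
  qed
qed

lemma th2_join: assumes cj: "cld_joins A" shows "join_complete A (theta2 A)"
  unfolding join_complete_def
proof (intro allI impI)
  fix S j assume lub: "is_lub A S j"
  have ub: "leq A s j" if "s \<in> S" for s using lub that by (simp add: is_lub_def)
  show "pgraph (theta2 A j) = (\<Union>s\<in>S. pgraph (theta2 A s))"
  proof (rule pg_union)
    fix x q show "theta2 A j x = Some q \<longleftrightarrow> (\<exists>s\<in>S. theta2 A s x = Some q)"
    proof (cases "x \<in> atoms A")
      case True then have xa: "is_atom A x" by (simp add: atoms_iff)
      show ?thesis
      proof
        assume "theta2 A j x = Some q"
        then have nz: "cmp A x j \<noteq> zr A" and q: "q = cmp A x j" by (auto simp: theta2_def split: if_splits)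
        obtain s where s: "s \<in> S" "cmp A x s \<noteq> zr A" using cmp_join_ex[OF cj lub nz] by blast
        have "cmp A x s = cmp A x j" using C_mono[OF xa ub[OF s(1)] s(2)] .
        then have "theta2 A s x = Some q" using s(2) True q by (simp add: theta2_def)
        then show "\<exists>s\<in>S. theta2 A s x = Some q" using s(1) by blast
      next
        assume "\<exists>s\<in>S. theta2 A s x = Some q"
        then obtain s where s: "s \<in> S" "theta2 A s x = Some q" by blast
        then have nz: "cmp A x s \<noteq> zr A" and q: "q = cmp A x s" by (auto simp: theta2_def split: if_splits)
        have "cmp A x s = cmp A x j" using C_mono[OF xa ub[OF s(1)] nz] .
        then show "theta2 A j x = Some q" using nz q True by (simp add: theta2_def)
      qed
    qed (simp add: theta2_def)
  qed
qed

lemma cmp_meet_eq: assumes cm: "cld_meets A" and glb: "is_glb A S m" and S: "s0 \<in> S"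
  and t: "\<And>s. s \<in> S \<Longrightarrow> cmp A x s = t"
  shows "cmp A x m = t"
proof -
  have g: "is_glb A ((\<lambda>s. cmp A x s) ` S) (cmp A x m)" using cm glb S by (auto simp: cld_meets_def)
  have "leq A t (cmp A x m)" using g t leq_refl by (auto simp: is_glb_def)
  moreover have "leq A (cmp A x m) t" using g t S by (auto simp: is_glb_def)
  ultimately show ?thesis by (simp add: leq_antisym)
qed

lemma restr_meet_eq: assumes glb: "is_glb A S m" and S: "s0 \<in> S"
  and t: "\<And>s. s \<in> S \<Longrightarrow> restr A r s = t"
  shows "restr A r m = t"
proof -
  have lb: "leq A m s" if "s \<in> S" for s using glb that by (simp add: is_glb_def)
  have ts: "leq A t s" if s: "s \<in> S" for s
    using t[OF s, symmetric] by (auto simp: leq_iff map_le_def T_restr' dom_def)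
  have tm: "T t \<subseteq>\<^sub>m T m" using glb ts by (simp add: is_glb_def leq_iff)
  have "T (restr A r m) \<subseteq>\<^sub>m T (restr A r s0)" using lb[OF S]
    by (auto simp: leq_iff map_le_def T_restr' dom_def)
  then have le1: "T (restr A r m) \<subseteq>\<^sub>m T t" using t[OF S] by simp
  have le2: "T t \<subseteq>\<^sub>m T (restr A r m)"
    unfolding map_le_def
  proof
    fix y assume y: "y \<in> dom (T t)"
    then have "T r y \<noteq> None" using t[OF S] by (auto simp: T_restr' dom_def split: if_splits)
    moreover have "T t y = T m y" using tm y by (simp add: map_le_def)
    ultimately show "T t y = T (restr A r m) y" by (auto simp: T_restr')
  qed
  show ?thesis using le1 le2 by (simp add: map_le_antisym Teq)
qed

lemma th1_meet: assumes cm: "cld_meets A" shows "meet_complete A (theta1 A)"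
  unfolding meet_complete_def
proof (intro allI impI)
  fix S m assume "S \<noteq> {} \<and> is_glb A S m"
  then have ne: "S \<noteq> {}" and glb: "is_glb A S m" by auto
  obtain s0 where s0: "s0 \<in> S" using ne by blast
  have lb: "leq A m s" if "s \<in> S" for s using glb that by (simp add: is_glb_def)
  show "pgraph (theta1 A m) = (\<Inter>s\<in>S. pgraph (theta1 A s))"
  proof (rule pg_inter)
    fix p q show "theta1 A m p = Some q \<longleftrightarrow> (\<forall>s\<in>S. theta1 A s p = Some q)"
    proof (cases p)
      case (Inl x)
      show ?thesis
      proof (cases "x \<in> atoms A")
        case True then have xa: "is_atom A x" by (simp add: atoms_iff)
        show ?thesis
        proof
          assume "theta1 A m p = Some q"
          then have nz: "cmp A x m \<noteq> zr A" and q: "q = Inl (cmp A x m)" using Inl by (auto simp: th1_Inl split: if_splits)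
          show "\<forall>s\<in>S. theta1 A s p = Some q"
          proof
            fix s assume s: "s \<in> S"
            have "cmp A x m = cmp A x s" using C_mono[OF xa lb[OF s] nz] .
            then show "theta1 A s p = Some q" using nz q Inl True by (simp add: th1_Inl)
          qed
        next
          assume h: "\<forall>s\<in>S. theta1 A s p = Some q"
          have e: "cmp A x s = cmp A x s0" if s: "s \<in> S" for s
            using h[rule_format, OF s] h[rule_format, OF s0] Inl by (auto simp: th1_Inl split: if_splits)
          have "cmp A x m = cmp A x s0" by (rule cmp_meet_eq[OF cm glb s0 e])
          then show "theta1 A m p = Some q" using h[rule_format, OF s0] Inl by (auto simp: th1_Inl split: if_splits)
        qed
      qed (use s0 in \<open>auto simp: Inl th1_Inl\<close>)
    next
      case (Inr c)
      show ?thesis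
      proof (cases "c \<in> Q")
        case True
        define r where "r = (SOME x. x \<in> c)"
        have ra: "is_atom A r" using Q_rep(1)[OF True] unfolding atoms_iff r_def .
        have ea: "theta1 A u (Inr c) = (if restr A r u \<noteq> zr A then Some (Inl (restr A r u)) else None)" for u
          using True by (simp add: th1_Inr r_def)
        show ?thesis
        proof
          assume "theta1 A m p = Some q"
          then have nz: "restr A r m \<noteq> zr A" and q: "q = Inl (restr A r m)" using Inr by (auto simp: ea split: if_splits)
          show "\<forall>s\<in>S. theta1 A s p = Some q"
          proof
            fix s assume s: "s \<in> S"
            have "restr A r m = restr A r s" using R_mono[OF ra lb[OF s] nz] .
            then show "theta1 A s p = Some q" using nz q Inr by (simp add: ea)
          qed
        next
          assume h: "\<forall>s\<in>S. theta1 A s p = Some q"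
          have e: "restr A r s = restr A r s0" if s: "s \<in> S" for s
            using h[rule_format, OF s] h[rule_format, OF s0] Inr by (auto simp: ea split: if_splits)
          have "restr A r m = restr A r s0" by (rule restr_meet_eq[OF glb s0 e])
          then show "theta1 A m p = Some q" using h[rule_format, OF s0] Inr by (auto simp: ea split: if_splits)
        qed
      qed (use s0 in \<open>auto simp: Inr th1_Inr\<close>)
    qed
  qed
qed

lemma th2_meet: assumes cm: "cld_meets A" shows "meet_complete A (theta2 A)"
  unfolding meet_complete_def
proof (intro allI impI)
  fix S m assume "S \<noteq> {} \<and> is_glb A S m"
  then have ne: "S \<noteq> {}" and glb: "is_glb A S m" by auto
  obtain s0 where s0: "s0 \<in> S" using ne by blast
  have lb: "leq A m s" if "s \<in> S" for s using glb that by (simp add: is_glb_def)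
  show "pgraph (theta2 A m) = (\<Inter>s\<in>S. pgraph (theta2 A s))"
  proof (rule pg_inter)
    fix x q show "theta2 A m x = Some q \<longleftrightarrow> (\<forall>s\<in>S. theta2 A s x = Some q)"
    proof (cases "x \<in> atoms A")
      case True then have xa: "is_atom A x" by (simp add: atoms_iff)
      show ?thesis
      proof
        assume "theta2 A m x = Some q"
        then have nz: "cmp A x m \<noteq> zr A" and q: "q = cmp A x m" by (auto simp: theta2_def split: if_splits)
        show "\<forall>s\<in>S. theta2 A s x = Some q"
        proof
          fix s assume s: "s \<in> S"
          have "cmp A x m = cmp A x s" using C_mono[OF xa lb[OF s] nz] .
          then show "theta2 A s x = Some q" using nz q True by (simp add: theta2_def)
        qed
      next
        assume h: "\<forall>s\<in>S. theta2 A s x = Some q"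
        have e: "cmp A x s = cmp A x s0" if s: "s \<in> S" for s
          using h[rule_format, OF s] h[rule_format, OF s0] by (auto simp: theta2_def split: if_splits)
        have "cmp A x m = cmp A x s0" by (rule cmp_meet_eq[OF cm glb s0 e])
        then show "theta2 A m x = Some q" using h[rule_format, OF s0] by (auto simp: theta2_def split: if_splits)
      qed
    qed (use s0 in \<open>auto simp: theta2_def\<close>)
  qed
qed

end

theorem proposition6p1:
  fixes \<sigma> :: "opsym set" and A :: "'a alg"
    and X0 :: "'b set" and \<theta>0 :: "'a \<Rightarrow> ('b \<rightharpoonup> 'b)"
  assumes sig: "{Ovr, Comp} \<subseteq> \<sigma>"
    and repr: "is_rep \<sigma> A X0 \<theta>0"
    and sep: "separating A"
  shows "equiv (atoms A) (sim_rel A)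
    \<and> (\<forall>a x. x \<in> atoms A \<and> cmp A x a \<noteq> zr A \<longrightarrow> cmp A x a \<in> atoms A)
    \<and> (Dom \<notin> \<sigma> \<and> ADom \<notin> \<sigma> \<longrightarrow>
          (\<forall>a x. x \<in> atoms A \<and> restr A x a \<noteq> zr A \<longrightarrow> restr A x a \<in> atoms A)
        \<and> (\<forall>a x y. (x, y) \<in> sim_rel A \<longrightarrow> restr A x a = restr A y a)
        \<and> is_rep \<sigma> A (base1 A) (theta1 A)
        \<and> (cld_joins A \<longrightarrow> join_complete A (theta1 A))
        \<and> (cld_meets A \<longrightarrow> meet_complete A (theta1 A)))
    \<and> (Dom \<in> \<sigma> \<or> ADom \<in> \<sigma> \<longrightarrow>
          is_rep \<sigma> A (atoms A) (theta2 A)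
        \<and> (cld_joins A \<longrightarrow> join_complete A (theta2 A))
        \<and> (cld_meets A \<longrightarrow> meet_complete A (theta2 A)))"
proof -
  have R1: "inj \<theta>0" using repr unfolding is_rep_def by blast
  have R2: "\<forall>a. pfun_on X0 (\<theta>0 a)" using repr unfolding is_rep_def by blast
  have R3: "Ovr \<in> \<sigma> \<longrightarrow> (\<forall>a b. \<theta>0 (ovr A a b) = pf_ovr (\<theta>0 a) (\<theta>0 b))" using repr unfolding is_rep_def by blast
  have R4: "Comp \<in> \<sigma> \<longrightarrow> (\<forall>a b. \<theta>0 (cmp A a b) = pf_comp (\<theta>0 a) (\<theta>0 b))" using repr unfolding is_rep_def by blast
  have R5: "Meet \<in> \<sigma> \<longrightarrow> (\<forall>a b. \<theta>0 (mt A a b) = pf_meet (\<theta>0 a) (\<theta>0 b))" using repr unfolding is_rep_def by blast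
  have R6: "Upd \<in> \<sigma> \<longrightarrow> (\<forall>a b. \<theta>0 (upd A a b) = pf_upd (\<theta>0 a) (\<theta>0 b))" using repr unfolding is_rep_def by blast
  have R7: "PJoin \<in> \<sigma> \<longrightarrow> (\<forall>a b. \<theta>0 (pjn A a b) = pf_join (\<theta>0 a) (\<theta>0 b))" using repr unfolding is_rep_def by blast
  have R8: "Dom \<in> \<sigma> \<longrightarrow> (\<forall>a. \<theta>0 (dm A a) = pf_D (\<theta>0 a))" using repr unfolding is_rep_def by blast
  have R9: "ADom \<in> \<sigma> \<longrightarrow> (\<forall>a. \<theta>0 (adm A a) = pf_A X0 (\<theta>0 a))" using repr unfolding is_rep_def by blast
  have ovr0: "Ovr \<in> \<sigma>" and cmp0: "Comp \<in> \<sigma>" using sig by auto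
  interpret rp A X0 \<theta>0
  proof
    show "inj \<theta>0" by (rule R1)
    show "\<And>a. pfun_on X0 (\<theta>0 a)" using R2 by blast
    show "\<And>a b. \<theta>0 (ovr A a b) = pf_ovr (\<theta>0 a) (\<theta>0 b)" using R3 ovr0 by blast
    show "\<And>a b. \<theta>0 (cmp A a b) = pf_comp (\<theta>0 a) (\<theta>0 b)" using R4 cmp0 by blast
  qed
  have P1: "equiv (atoms A) (sim_rel A)" by (rule equiv_sim)
  have P2: "\<forall>a x. x \<in> atoms A \<and> cmp A x a \<noteq> zr A \<longrightarrow> cmp A x a \<in> atoms A"
    using cmp_atom by (simp add: atoms_iff)
  have P3: "Dom \<notin> \<sigma> \<and> ADom \<notin> \<sigma> \<longrightarrow>
          (\<forall>a x. x \<in> atoms A \<and> restr A x a \<noteq> zr A \<longrightarrow> restr A x a \<in> atoms A)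
        \<and> (\<forall>a x y. (x, y) \<in> sim_rel A \<longrightarrow> restr A x a = restr A y a)
        \<and> is_rep \<sigma> A (base1 A) (theta1 A)
        \<and> (cld_joins A \<longrightarrow> join_complete A (theta1 A))
        \<and> (cld_meets A \<longrightarrow> meet_complete A (theta1 A))"
  proof (intro impI conjI)
    assume nd: "Dom \<notin> \<sigma> \<and> ADom \<notin> \<sigma>"
    show "\<forall>a x. x \<in> atoms A \<and> restr A x a \<noteq> zr A \<longrightarrow> restr A x a \<in> atoms A"
      using restr_atom by (simp add: atoms_iff)
    show "\<forall>a x y. (x, y) \<in> sim_rel A \<longrightarrow> restr A x a = restr A y a"
    proof (intro allI impI)
      fix a x y assume "(x, y) \<in> sim_rel A"
      then have "dom (\<theta>0 x) = dom (\<theta>0 y)" by (simp add: sim_rel_def sim_iff)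
      then show "restr A x a = restr A y a" by (rule restr_sim)
    qed
    show "is_rep \<sigma> A (base1 A) (theta1 A)"
      unfolding is_rep_def
    proof (intro conjI impI allI)
      show "inj (theta1 A)" by (rule th1_inj[OF sep])
      show "\<And>a. pfun_on (base1 A) (theta1 A a)" by (rule th1_pf)
      show "\<And>a b. theta1 A (ovr A a b) = pf_ovr (theta1 A a) (theta1 A b)" by (rule th1_ovr)
      show "\<And>a b. theta1 A (cmp A a b) = pf_comp (theta1 A a) (theta1 A b)" by (rule th1_cmp)
      show "\<And>a b. Meet \<in> \<sigma> \<Longrightarrow> theta1 A (mt A a b) = pf_meet (theta1 A a) (theta1 A b)"
        by (rule th1_mt) (use R5 in blast)
      show "\<And>a b. Upd \<in> \<sigma> \<Longrightarrow> theta1 A (upd A a b) = pf_upd (theta1 A a) (theta1 A b)"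
        by (rule th1_upd) (use R6 in blast)
      show "\<And>a b. PJoin \<in> \<sigma> \<Longrightarrow> theta1 A (pjn A a b) = pf_join (theta1 A a) (theta1 A b)"
        by (rule th1_pjn) (use R7 in blast)
      show "\<And>a. Dom \<in> \<sigma> \<Longrightarrow> theta1 A (dm A a) = pf_D (theta1 A a)" using nd by blast
      show "\<And>a. ADom \<in> \<sigma> \<Longrightarrow> theta1 A (adm A a) = pf_A (base1 A) (theta1 A a)" using nd by blast
    qed
    show "cld_joins A \<Longrightarrow> join_complete A (theta1 A)" by (rule th1_join)
    show "cld_meets A \<Longrightarrow> meet_complete A (theta1 A)" by (rule th1_meet)
  qed
  have P4: "Dom \<in> \<sigma> \<or> ADom \<in> \<sigma> \<longrightarrow>
          is_rep \<sigma> A (atoms A) (theta2 A)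
        \<and> (cld_joins A \<longrightarrow> join_complete A (theta2 A))
        \<and> (cld_meets A \<longrightarrow> meet_complete A (theta2 A))"
  proof (intro impI conjI)
    assume da: "Dom \<in> \<sigma> \<or> ADom \<in> \<sigma>"
    have De: "\<exists>e. \<theta>0 e = pf_D (\<theta>0 c)" if "is_atom A c" for c
    proof (cases "Dom \<in> \<sigma>")
      case True then show ?thesis using R8 by blast
    next
      case False
      then have ad: "ADom \<in> \<sigma>" using da by blast
      have dX: "\<theta>0 c y \<noteq> None \<Longrightarrow> y \<in> X0" for y using pfT[of c] by (auto simp: pfun_on_def)
      have "\<theta>0 (adm A (adm A c)) = pf_D (\<theta>0 c)"
      proof (rule ext)
        fix y
        have e1: "\<theta>0 (adm A (adm A c)) = pf_A X0 (\<theta>0 (adm A c))" using R9 ad by blast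
        have e2: "\<theta>0 (adm A c) = pf_A X0 (\<theta>0 c)" using R9 ad by blast
        show "\<theta>0 (adm A (adm A c)) y = pf_D (\<theta>0 c) y"
          unfolding e1 e2 using dX[of y] by (simp add: pf_A_def pf_D_def)
      qed
      then show ?thesis by blast
    qed
    show "is_rep \<sigma> A (atoms A) (theta2 A)"
      unfolding is_rep_def
    proof (intro conjI impI allI)
      show "inj (theta2 A)" by (rule th2_inj[OF sep De])
      show "\<And>a. pfun_on (atoms A) (theta2 A a)" by (rule th2_pf)
      show "\<And>a b. theta2 A (ovr A a b) = pf_ovr (theta2 A a) (theta2 A b)" by (rule th2_ovr)
      show "\<And>a b. theta2 A (cmp A a b) = pf_comp (theta2 A a) (theta2 A b)" by (rule th2_cmp)
      show "\<And>a b. Meet \<in> \<sigma> \<Longrightarrow> theta2 A (mt A a b) = pf_meet (theta2 A a) (theta2 A b)"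
        by (rule th2_mt) (use R5 in blast)
      show "\<And>a b. Upd \<in> \<sigma> \<Longrightarrow> theta2 A (upd A a b) = pf_upd (theta2 A a) (theta2 A b)"
        by (rule th2_upd) (use R6 in blast)
      show "\<And>a b. PJoin \<in> \<sigma> \<Longrightarrow> theta2 A (pjn A a b) = pf_join (theta2 A a) (theta2 A b)"
        by (rule th2_pjn) (use R7 in blast)
      show "\<And>a. Dom \<in> \<sigma> \<Longrightarrow> theta2 A (dm A a) = pf_D (theta2 A a)"
        by (rule th2_dm) (use R8 in blast)
      show "\<And>a. ADom \<in> \<sigma> \<Longrightarrow> theta2 A (adm A a) = pf_A (atoms A) (theta2 A a)"
        by (rule th2_adm) (use R9 in blast)
    qed
    show "cld_joins A \<Longrightarrow> join_complete A (theta2 A)" by (rule th2_join)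
    show "cld_meets A \<Longrightarrow> meet_complete A (theta2 A)" by (rule th2_meet)
  qed
  show ?thesis using P1 P2 P3 P4 by (intro conjI)
qed

end
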